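(* Let $\beta>0$ and $m\ge1$. For $\delta>0$ and $n\ge1$ let $\mathcal{B}_\delta$ be the event \[ \sum_{i=1}^n\left(\frac{\Delta(H_{mi})}{(mi)^{2/(2+\beta)}}\right)^2\ge n^{\frac{\beta}{2+\beta}+\delta}. \] Then for any $\delta>0$ and $\gamma>0$ there exists a constant $L$, depending on $\delta,\gamma,\beta,m$ but not on $n$, such that $\Pr(\mathcal{B}_\delta)\le L\,n^{-\gamma}$ for all $n\ge1$.
   Context: Fix a real $\beta>0$ and a positive integer $m$. The random tree process $(G^n_{1,\beta})_{n\ge1}$ is defined as follows. $G^1_{1,\beta}$ consists of a single vertex $v_1$ and no edges. Given $G^n_{1,\beta}$ with vertices $v_1,\dots,v_n$ and directed edges $e_2,\dots,e_n$ (where $e_i$ is the edge whose tail is $v_i$), $G^{n+1}_{1,\beta}$ is obtained by adding a vertex $v_{n+1}$ and a directed edge $e_{n+1}$ with tail $v_{n+1}$ and head a "target vertex" determined by a random variable $f_{n+1}$, independent of $f_2,\dots,f_n$, taking values in $\Omega_{n+1}=\{(i,v):1\le i\le n\}\cup\{(i,h),(i,t):2\le i\le n\}$ with $\Pr(f_{n+1}=(i,v))=\beta/((2+\beta)n-2)$ and $\Pr(f_{n+1}=(i,h))=\Pr(f_{n+1}=(i,t))=1/((2+\beta)n-2)$. If $f_{n+1}=(i,v)$ the target is $v_i$ (chosen "uniformly"); if $f_{n+1}=(i,h)$ the target is the head of $e_i$, and if $f_{n+1}=(i,t)$ the target is the tail $v_i$ of $e_i$ (chosen "preferentially", by copying the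 head half-edge, resp. tail half-edge, of $e_i$). Consequently the target is $v_i$ with probability $(d_n(v_i)+\beta)/((2+\beta)n-2)$, where $d_n(v)$ is the degree of $v$ in $G^n_{1,\beta}$. Each edge is regarded as two half-edges, one at each endpoint; the degree of a vertex is the number of half-edges at it (loops count twice). For $t\ge1$, $H_t$ is the undirected multigraph formed from $G^t_{1,\beta}$ by identifying, for each $j<\lceil t/m\rceil$, the vertices $v_{(j-1)m+1},\dots,v_{jm}$ into one vertex $w_j$, and identifying the remaining vertices into one vertex $w_{\lceil t/m\rceil}$ (all edges kept). $\Delta(G)$ denotes the maximum degree of $G$. Known input (M\'ori): for any positive integer $k$ there exists $\tilde M_k$ such that for all $n$, $\mathbb{E}\big[\big((\Delta(G^n_{1,\beta})+\beta)/n^{1/(2+\beta)}\big)^k\big]\le\tilde M_k$. *)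

theory Defs
  imports "HOL-Probability.Probability"
begin

text \<open>Elements of \<Omega>_{n+1}: (i,v), (i,h), (i,t).\<close>
datatype choice = Vx nat | Hd nat | Tl nat

text \<open>Weight of each outcome of f_{n+1} (graph G^n has n vertices).\<close>
definition fweight :: "real \<Rightarrow> nat \<Rightarrow> choice \<Rightarrow> real" where
  "fweight \<beta> n c = (case c of
      Vx i \<Rightarrow> if 1 \<le> i \<and> i \<le> n then \<beta> / ((2 + \<beta>) * real n - 2) else 0
    | Hd i \<Rightarrow> if 2 \<le> i \<and> i \<le> n then 1 / ((2 + \<beta>) * real n - 2) else 0
    | Tl i \<Rightarrow> if 2 \<le> i \<and> i \<le> n then 1 / ((2 + \<beta>) * real n - 2) else 0)"

definition fpmf :: "real \<Rightarrow> nat \<Rightarrow> choice pmf" where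
  "fpmf \<beta> n = embed_pmf (fweight \<beta> n)"

text \<open>Joint law of the list [f_2, ..., f_t] (independent), i.e. of G^t.\<close>
fun choices :: "real \<Rightarrow> nat \<Rightarrow> choice list pmf" where
  "choices \<beta> 0 = return_pmf []"
| "choices \<beta> (Suc k) =
     (if k = 0 then return_pmf []
      else bind_pmf (choices \<beta> k) (\<lambda>xs. map_pmf (\<lambda>f. xs @ [f]) (fpmf \<beta> k)))"

text \<open>Heads: given the list hs of heads of e_2,...,e_k, the head of e_{k+1}.\<close>
definition target :: "nat list \<Rightarrow> choice \<Rightarrow> nat" where
  "target hs c = (case c of Vx i \<Rightarrow> i | Tl i \<Rightarrow> i | Hd i \<Rightarrow> hs ! (i - 2))"

definition heads :: "choice list \<Rightarrow> nat list" where
  "heads fs = foldl (\<lambda>hs f. hs @ [target hs f]) [] fs"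

definition head :: "choice list \<Rightarrow> nat \<Rightarrow> nat" where
  "head fs i = heads fs ! (i - 2)"

text \<open>Vertex v_v of G^t is mapped to w_{ceil(v/m)} in H_t.\<close>
definition blk :: "nat \<Rightarrow> nat \<Rightarrow> nat" where
  "blk m v = (v + m - 1) div m"

text \<open>Degree of w_j in H_t (number of half-edges, loops count twice).\<close>
definition degH :: "nat \<Rightarrow> choice list \<Rightarrow> nat \<Rightarrow> nat \<Rightarrow> nat" where
  "degH m fs t j = card {i \<in> {2..t}. blk m i = j} + card {i \<in> {2..t}. blk m (head fs i) = j}"

definition maxdegH :: "nat \<Rightarrow> choice list \<Rightarrow> nat \<Rightarrow> nat" where
  "maxdegH m fs t = Max (degH m fs t ` {1..blk m t})"

definition eventB :: "real \<Rightarrow> nat \<Rightarrow> real \<Rightarrow> nat \<Rightarrow> choice list set" where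
  "eventB \<beta> m \<delta> n = {fs. (\<Sum>i=1..n. (real (maxdegH m fs (m * i)) / real (m * i) powr (2 / (2 + \<beta>)))\<^sup>2)
        \<ge> real n powr (\<beta> / (2 + \<beta>) + \<delta>)}"

end

theory Submission
  imports Defs
begin


definition Om :: "nat \<Rightarrow> choice set" where
  "Om n = Vx ` {1..n} \<union> Hd ` {2..n} \<union> Tl ` {2..n}"

lemma finite_Om: "finite (Om n)" by (simp add: Om_def)

lemma S_pos: "\<beta> > 0 \<Longrightarrow> n \<ge> 1 \<Longrightarrow> (2 + \<beta>) * real n - 2 > 0"
proof -
  assume "\<beta> > 0" "n \<ge> 1"
  hence "(2 + \<beta>) * real n \<ge> (2 + \<beta>) * 1" by (intro mult_left_mono) auto
  hence "(2 + \<beta>) * real n \<ge> 2 + \<beta>" by simp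
  thus ?thesis using \<open>\<beta> > 0\<close> by linarith
qed

lemma fweight_nonneg: "\<beta> > 0 \<Longrightarrow> 0 \<le> fweight \<beta> n c"
  using S_pos[of \<beta> n] by (auto simp: fweight_def split: choice.split)

lemma fweight_zero: "c \<notin> Om n \<Longrightarrow> fweight \<beta> n c = 0"
  by (auto simp: fweight_def Om_def split: choice.split)

lemma sum_Om:
  fixes g :: "choice \<Rightarrow> real"
  shows "(\<Sum>c\<in>Om n. g c) = (\<Sum>i=1..n. g (Vx i)) + (\<Sum>i=2..n. g (Hd i)) + (\<Sum>i=2..n. g (Tl i))"
proof -
  have d1: "(Vx ` {1..n} \<union> Hd ` {2..n}) \<inter> Tl ` {2..n} = {}" by auto
  have d2: "Vx ` {1..n} \<inter> Hd ` {2..n} = {}" by auto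
  show ?thesis unfolding Om_def
    apply (subst sum.union_disjoint[OF _ _ d1], simp, simp)
    apply (subst sum.union_disjoint[OF _ _ d2], simp, simp)
    apply (subst sum.reindex, simp add: inj_on_def)+
    apply (simp add: comp_def)
    done
qed

lemma sum_fweight:
  assumes "\<beta> > 0" "n \<ge> 1"
  shows "(\<Sum>c\<in>Om n. fweight \<beta> n c) = 1"
proof -
  define S where "S = (2 + \<beta>) * real n - 2"
  have S: "S > 0" using S_pos[OF assms] by (simp add: S_def)
  have "(\<Sum>c\<in>Om n. fweight \<beta> n c) = real n * (\<beta> / S) + real (n - 1) * (1/S) + real (n - 1) * (1/S)"
    unfolding sum_Om by (simp add: fweight_def S_def)
  also have "\<dots> = (real n * \<beta> + 2 * real (n - 1)) / S" by (simp add: add_divide_distrib)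
  also have "real n * \<beta> + 2 * real (n - 1) = S" using assms(2) by (simp add: S_def of_nat_diff algebra_simps)
  finally show ?thesis using S by simp
qed

lemma fpmf_ok:
  assumes "\<beta> > 0" "n \<ge> 1"
  shows "(\<integral>\<^sup>+x. ennreal (fweight \<beta> n x) \<partial>count_space UNIV) = 1"
proof -
  have "(\<integral>\<^sup>+x. ennreal (fweight \<beta> n x) \<partial>count_space UNIV) = (\<Sum>x\<in>Om n. ennreal (fweight \<beta> n x))"
    by (rule nn_integral_count_space') (auto simp: finite_Om fweight_zero)
  also have "\<dots> = ennreal (\<Sum>x\<in>Om n. fweight \<beta> n x)"
    using fweight_nonneg[OF assms(1)] by (simp add: sum_ennreal)
  also have "\<dots> = 1" by (simp only: sum_fweight[OF assms] ennreal_1)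
  finally show ?thesis .
qed

lemma pmf_fpmf: "\<beta> > 0 \<Longrightarrow> n \<ge> 1 \<Longrightarrow> pmf (fpmf \<beta> n) c = fweight \<beta> n c"
  unfolding fpmf_def by (rule pmf_embed_pmf[OF fweight_nonneg fpmf_ok])

lemma set_fpmf: "\<beta> > 0 \<Longrightarrow> n \<ge> 1 \<Longrightarrow> set_pmf (fpmf \<beta> n) \<subseteq> Om n"
proof
  fix x assume "\<beta> > 0" "n \<ge> 1" "x \<in> set_pmf (fpmf \<beta> n)"
  hence "fweight \<beta> n x \<noteq> 0" using pmf_fpmf[of \<beta> n x] by (simp add: set_pmf_eq)
  thus "x \<in> Om n" using fweight_zero by blast
qed

lemma expect_fpmf:
  assumes "\<beta> > 0" "n \<ge> 1"
  shows "measure_pmf.expectation (fpmf \<beta> n) h = (\<Sum>c\<in>Om n. fweight \<beta> n c * h c)"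
  apply (subst integral_measure_pmf_real[OF finite_Om])
  using set_fpmf[OF assms] apply blast
  by (simp add: pmf_fpmf[OF assms] mult.commute)



definition valid :: "choice list \<Rightarrow> bool" where
  "valid fs = (\<forall>j<length fs. fs ! j \<in> Om (Suc j))"

lemma heads_snoc: "heads (xs @ [f]) = heads xs @ [target (heads xs) f]"
  by (simp add: heads_def)

lemma heads_Nil[simp]: "heads [] = []" by (simp add: heads_def)

lemma length_heads[simp]: "length (heads xs) = length xs"
  by (induction xs rule: rev_induct) (auto simp: heads_snoc)


lemma heads_append_take: "take (length xs) (heads (xs @ ys)) = heads xs"
proof (induction ys rule: rev_induct)
  case Nil thus ?case by simp
next
  case (snoc y ys)
  have "heads (xs @ ys @ [y]) = heads (xs @ ys) @ [target (heads (xs @ ys)) y]"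
    using heads_snoc[of "xs @ ys" y] by simp
  thus ?case using snoc by simp
qed

lemma heads_take: "heads (take n fs) = take n (heads fs)"
proof (cases "n \<le> length fs")
  case True
  have "take n (heads (take n fs @ drop n fs)) = heads (take n fs)"
    using heads_append_take[of "take n fs" "drop n fs"] True by simp
  thus ?thesis by simp
next
  case False thus ?thesis by simp
qed

lemma head_take: "i \<le> Suc n \<Longrightarrow> 2 \<le> i \<Longrightarrow> head (take n fs) i = head fs i"
  unfolding head_def heads_take by (simp add: nth_take)

lemma head_snoc_le: "i \<le> Suc (length xs) \<Longrightarrow> 2 \<le> i \<Longrightarrow> head (xs @ [f]) i = head xs i"
  using head_take[of i "length xs" "xs @ [f]"] by simp

lemma head_snoc_last: "head (xs @ [f]) (Suc (Suc (length xs))) = target (heads xs) f"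
  by (simp add: head_def heads_snoc nth_append)

lemma valid_snoc: "valid (xs @ [f]) \<longleftrightarrow> valid xs \<and> f \<in> Om (Suc (length xs))"
  unfolding valid_def by (auto simp: nth_append less_Suc_eq)

lemma target_range:
  assumes "\<forall>i\<in>{2..Suc (length xs)}. 1 \<le> head xs i \<and> head xs i < i"
    and "f \<in> Om (Suc (length xs))"
  shows "1 \<le> target (heads xs) f \<and> target (heads xs) f \<le> Suc (length xs)"
proof -
  { fix i assume i: "f = Hd i" "2 \<le> i" "i \<le> Suc (length xs)"
    hence "1 \<le> head xs i \<and> head xs i < i" using assms(1) by auto
    hence ?thesis using i by (auto simp: target_def head_def) }
  thus ?thesis using assms(2) by (auto simp: Om_def target_def)
qed

lemma valid_heads:
  "valid fs \<Longrightarrow> i \<in> {2..Suc (length fs)} \<Longrightarrow> 1 \<le> head fs i \<and> head fs i < i"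
proof (induction fs arbitrary: i rule: rev_induct)
  case Nil thus ?case by simp
next
  case (snoc f xs)
  have vx: "valid xs" and fO: "f \<in> Om (Suc (length xs))" using snoc.prems(1) by (auto simp: valid_snoc)
  have IH: "\<forall>i\<in>{2..Suc (length xs)}. 1 \<le> head xs i \<and> head xs i < i" using snoc.IH vx by blast
  show ?case
  proof (cases "i \<le> Suc (length xs)")
    case True thus ?thesis using IH head_snoc_le[of i xs f] snoc.prems(2) by auto
  next
    case False
    hence "i = Suc (Suc (length xs))" using snoc.prems(2) by auto
    thus ?thesis using head_snoc_last[of xs f] target_range[OF IH fO] by auto
  qed
qed

lemma set_choices:
  assumes "\<beta> > 0"
  shows "set_pmf (choices \<beta> t) \<subseteq> {fs. length fs = t - 1 \<and> valid fs}"
proof (induction t)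
  case 0 thus ?case by (simp add: valid_def)
next
  case (Suc k)
  show ?case
  proof (cases "k = 0")
    case True thus ?thesis by (simp add: valid_def)
  next
    case False
    have "set_pmf (choices \<beta> (Suc k)) = (\<Union>xs\<in>set_pmf (choices \<beta> k). (\<lambda>f. xs @ [f]) ` set_pmf (fpmf \<beta> k))"
      using False by simp
    also have "\<dots> \<subseteq> {fs. length fs = Suc k - 1 \<and> valid fs}"
    proof safe
      fix xs f assume xs: "xs \<in> set_pmf (choices \<beta> k)" and f: "f \<in> set_pmf (fpmf \<beta> k)"
      have l: "length xs = k - 1" "valid xs" using Suc xs by auto
      have "f \<in> Om k" using set_fpmf[OF assms, of k] f False by auto
      thus "length (xs @ [f]) = Suc k - 1" "valid (xs @ [f])" using l False by (auto simp: valid_snoc)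
    qed
    finally show ?thesis .
  qed
qed

lemma finite_valid: "finite {fs. length fs = n \<and> valid fs}"
proof -
  have "{fs. length fs = n \<and> valid fs} \<subseteq> {fs. set fs \<subseteq> (\<Union>j\<le>n. Om j) \<and> length fs = n}"
    by (auto simp: valid_def in_set_conv_nth) (metis Suc_leI atMost_iff)
  moreover have "finite {fs. set fs \<subseteq> (\<Union>j\<le>n. Om j) \<and> length fs = n}"
    by (rule finite_lists_length_eq) (simp add: finite_Om)
  ultimately show ?thesis by (rule finite_subset)
qed

lemma finite_set_choices: "\<beta> > 0 \<Longrightarrow> finite (set_pmf (choices \<beta> t))"
  using set_choices finite_valid finite_subset by blast



definition dG :: "choice list \<Rightarrow> nat \<Rightarrow> nat \<Rightarrow> nat" where
  "dG fs t v = card {i\<in>{2..t}. i = v} + card {i\<in>{2..t}. head fs i = v}"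

definition R :: "real \<Rightarrow> nat \<Rightarrow> nat \<Rightarrow> real" where
  "R \<beta> k d = (\<Prod>j<k. real d + \<beta> + real j)"

definition Phi :: "real \<Rightarrow> nat \<Rightarrow> choice list \<Rightarrow> nat \<Rightarrow> real" where
  "Phi \<beta> k fs t = (\<Sum>v=1..t. R \<beta> k (dG fs t v))"

lemma R_Suc_d: "(real d + \<beta>) * R \<beta> k (Suc d) = R \<beta> k d * (real d + \<beta> + real k)"
  by (induction k) (auto simp: R_def algebra_simps)

lemma R_nonneg: "\<beta> > 0 \<Longrightarrow> 0 \<le> R \<beta> k d"
  unfolding R_def by (intro prod_nonneg) auto

lemma R_ge_pow: "\<beta> > 0 \<Longrightarrow> real d ^ k \<le> R \<beta> k d"
proof (induction k)
  case 0 thus ?case by (simp add: R_def)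
next
  case (Suc k)
  have "real d ^ Suc k = real d ^ k * real d" by simp
  also have "\<dots> \<le> R \<beta> k d * (real d + \<beta> + real k)"
    using Suc R_nonneg[of \<beta> k d] by (intro mult_mono) auto
  also have "\<dots> = R \<beta> (Suc k) d" by (simp add: R_def)
  finally show ?case .
qed

lemma R_diff: "(real d + \<beta>) * (R \<beta> k (Suc d) - R \<beta> k d) = real k * R \<beta> k d"
  using R_Suc_d[of d \<beta> k] by (simp add: algebra_simps)

lemma card_filter_Suc: "a \<le> Suc b \<Longrightarrow>
   card {i\<in>{a..Suc b}. P i} = card {i\<in>{a..b}. P i} + (if P (Suc b) then 1 else 0)"
proof -
  assume "a \<le> Suc b"
  hence "{i\<in>{a..Suc b}. P i} = (if P (Suc b) then insert (Suc b) {i\<in>{a..b}. P i} else {i\<in>{a..b}. P i})"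
    using le_Suc_eq by auto
  thus ?thesis by simp
qed

lemma card_filter_cong: "(\<And>i. i \<in> A \<Longrightarrow> P i = Q i) \<Longrightarrow> card {i\<in>A. P i} = card {i\<in>A. Q i}"
  by (metis (mono_tags, lifting) Collect_cong)

context
  fixes xs :: "choice list" and f :: choice and t :: nat
  assumes len: "length xs = t - 1" and t1: "t \<ge> 1" and vx: "valid xs" and fO: "f \<in> Om t"
begin

definition "u = target (heads xs) f"

lemma Suc_len: "Suc (length xs) = t" using len t1 by simp

lemma hd_range: "i \<in> {2..t} \<Longrightarrow> 1 \<le> head xs i \<and> head xs i < i"
  using valid_heads[OF vx] Suc_len by auto

lemma u_range: "1 \<le> u \<and> u \<le> t"
  using target_range[of xs f] hd_range fO Suc_len unfolding u_def by auto

lemma dG_step: "dG (xs @ [f]) (Suc t) v = dG xs t v + (if v = Suc t then 1 else 0) + (if u = v then 1 else 0)"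
proof -
  have h1: "card {i\<in>{2..Suc t}. i = v} = card {i\<in>{2..t}. i = v} + (if v = Suc t then 1 else 0)"
    using card_filter_Suc[of 2 t "\<lambda>i. i = v"] t1 by auto
  have "card {i\<in>{2..Suc t}. head (xs @ [f]) i = v} = card {i\<in>{2..t}. head (xs @ [f]) i = v}
          + (if head (xs @ [f]) (Suc t) = v then 1 else 0)"
    using card_filter_Suc[of 2 t "\<lambda>i. head (xs @ [f]) i = v"] t1 by auto
  also have "card {i\<in>{2..t}. head (xs @ [f]) i = v} = card {i\<in>{2..t}. head xs i = v}"
    by (rule card_filter_cong) (use head_snoc_le Suc_len in auto)
  also have "head (xs @ [f]) (Suc t) = u"
    using head_snoc_last[of xs f] Suc_len by (simp add: u_def)
  finally show ?thesis using h1 unfolding dG_def by simp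
qed

lemma dG_new: "dG xs t (Suc t) = 0"
proof -
  have "{i\<in>{2..t}. head xs i = Suc t} = {}" using hd_range by fastforce
  thus ?thesis unfolding dG_def by auto
qed

lemma Phi_step:
  "Phi \<beta> k (xs @ [f]) (Suc t) = Phi \<beta> k xs t + (R \<beta> k (Suc (dG xs t u)) - R \<beta> k (dG xs t u)) + R \<beta> k 1"
proof -
  have "Phi \<beta> k (xs @ [f]) (Suc t) = (\<Sum>v=1..t. R \<beta> k (dG (xs @ [f]) (Suc t) v)) + R \<beta> k (dG (xs @ [f]) (Suc t) (Suc t))"
    unfolding Phi_def by simp
  also have "R \<beta> k (dG (xs @ [f]) (Suc t) (Suc t)) = R \<beta> k 1"
    using dG_step[of "Suc t"] dG_new u_range by simp
  also have "(\<Sum>v=1..t. R \<beta> k (dG (xs @ [f]) (Suc t) v)) =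
      (\<Sum>v=1..t. R \<beta> k (dG xs t v) + (if v = u then R \<beta> k (Suc (dG xs t u)) - R \<beta> k (dG xs t u) else 0))"
    by (rule sum.cong) (auto simp: dG_step)
  also have "\<dots> = Phi \<beta> k xs t + (R \<beta> k (Suc (dG xs t u)) - R \<beta> k (dG xs t u))"
    unfolding sum.distrib Phi_def using u_range by simp
  finally show ?thesis .
qed

end



lemma sum_fiber:
  fixes g :: "nat \<Rightarrow> real"
  assumes "finite I" "finite V" "h ` I \<subseteq> V"
  shows "(\<Sum>i\<in>I. g (h i)) = (\<Sum>v\<in>V. real (card {i\<in>I. h i = v}) * g v)"
proof -
  have "(\<Sum>i\<in>I. g (h i)) = (\<Sum>v\<in>V. \<Sum>i\<in>{i\<in>I. h i = v}. g (h i))"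
    using sum.group[OF assms, of "\<lambda>i. g (h i)"] by simp
  also have "\<dots> = (\<Sum>v\<in>V. real (card {i\<in>I. h i = v}) * g v)"
    by (rule sum.cong) auto
  finally show ?thesis .
qed

lemma target_sum:
  fixes g :: "nat \<Rightarrow> real"
  assumes "\<beta> > 0" "t \<ge> 1"
  shows "(\<Sum>c\<in>Om t. fweight \<beta> t c * g (target (heads xs) c)) =
    (\<beta> * (\<Sum>i=1..t. g i) + (\<Sum>i=2..t. g i) + (\<Sum>i=2..t. g (head xs i))) / ((2 + \<beta>) * real t - 2)"
proof -
  define S where "S = (2 + \<beta>) * real t - 2"
  have "(\<Sum>c\<in>Om t. fweight \<beta> t c * g (target (heads xs) c)) =
     (\<Sum>i=1..t. \<beta> / S * g i) + (\<Sum>i=2..t. 1 / S * g (head xs i)) + (\<Sum>i=2..t. 1 / S * g i)"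
    unfolding sum_Om
    by (intro arg_cong2[where f="(+)"] sum.cong) (auto simp: fweight_def target_def head_def S_def)
  also have "\<dots> = (\<beta> * (\<Sum>i=1..t. g i) + (\<Sum>i=2..t. g i) + (\<Sum>i=2..t. g (head xs i))) / S"
    by (simp add: sum_divide_distrib sum_distrib_left add_divide_distrib)
  finally show ?thesis by (simp add: S_def)
qed

lemma expect_step:
  assumes b: "\<beta> > 0" and len: "length xs = t - 1" and t1: "t \<ge> 1" and vx: "valid xs"
  shows "measure_pmf.expectation (fpmf \<beta> t) (\<lambda>f. Phi \<beta> k (xs @ [f]) (Suc t))
     = Phi \<beta> k xs t * (1 + real k / ((2 + \<beta>) * real t - 2)) + R \<beta> k 1"
proof -
  define S where "S = (2 + \<beta>) * real t - 2"
  have S: "S > 0" using S_pos[OF b t1] by (simp add: S_def)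
  define d where "d = dG xs t"
  define g where "g v = R \<beta> k (Suc (d v)) - R \<beta> k (d v)" for v
  have hr: "i \<in> {2..t} \<Longrightarrow> 1 \<le> head xs i \<and> head xs i < i" for i
    using valid_heads[OF vx, of i] len t1 by auto
  have "measure_pmf.expectation (fpmf \<beta> t) (\<lambda>f. Phi \<beta> k (xs @ [f]) (Suc t))
     = (\<Sum>c\<in>Om t. fweight \<beta> t c * Phi \<beta> k (xs @ [c]) (Suc t))"
    by (rule expect_fpmf[OF b t1])
  also have "\<dots> = (\<Sum>c\<in>Om t. fweight \<beta> t c * ((Phi \<beta> k xs t + R \<beta> k 1) + g (target (heads xs) c)))"
    by (rule sum.cong[OF refl]) (simp add: Phi_step[OF len t1 vx] u_def[OF len t1 vx] g_def d_def)
  also have "\<dots> = (Phi \<beta> k xs t + R \<beta> k 1) * (\<Sum>c\<in>Om t. fweight \<beta> t c)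
       + (\<Sum>c\<in>Om t. fweight \<beta> t c * g (target (heads xs) c))"
    by (simp add: distrib_left sum.distrib sum_distrib_left mult.commute)
  also have "(\<Sum>c\<in>Om t. fweight \<beta> t c) = 1" by (rule sum_fweight[OF b t1])
  also have "(\<Sum>c\<in>Om t. fweight \<beta> t c * g (target (heads xs) c)) =
    (\<beta> * (\<Sum>i=1..t. g i) + (\<Sum>i=2..t. g i) + (\<Sum>i=2..t. g (head xs i))) / S"
    unfolding S_def by (rule target_sum[OF b t1])
  also have "(\<Sum>i=2..t. g (head xs i)) = (\<Sum>v=1..t. real (card {i\<in>{2..t}. head xs i = v}) * g v)"
    by (rule sum_fiber) (use hr in fastforce)+
  also have "(\<Sum>i=2..t. g i) = (\<Sum>v=1..t. real (card {i\<in>{2..t}. i = v}) * g v)"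
    using sum_fiber[of "{2..t}" "{1..t}" "\<lambda>i. i" g] by auto
  also have "\<beta> * (\<Sum>i=1..t. g i) + (\<Sum>v=1..t. real (card {i\<in>{2..t}. i = v}) * g v)
      + (\<Sum>v=1..t. real (card {i\<in>{2..t}. head xs i = v}) * g v) = (\<Sum>v=1..t. (real (d v) + \<beta>) * g v)"
    by (simp add: sum_distrib_left sum.distrib[symmetric] d_def dG_def algebra_simps)
  also have "\<dots> = (\<Sum>v=1..t. real k * R \<beta> k (d v))"
    unfolding g_def by (rule sum.cong[OF refl]) (rule R_diff)
  also have "\<dots> = real k * Phi \<beta> k xs t"
    by (simp add: Phi_def d_def sum_distrib_left)
  finally show ?thesis using S by (simp add: S_def algebra_simps)
qed



definition EPhi :: "real \<Rightarrow> nat \<Rightarrow> nat \<Rightarrow> real" where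
  "EPhi \<beta> k t = measure_pmf.expectation (choices \<beta> t) (\<lambda>fs. Phi \<beta> k fs t)"

lemma EPhi_1: "EPhi \<beta> k 1 = R \<beta> k 0"
  by (simp add: EPhi_def Phi_def dG_def)

lemma EPhi_step:
  assumes b: "\<beta> > 0" and t1: "t \<ge> 1"
  shows "EPhi \<beta> k (Suc t) = EPhi \<beta> k t * (1 + real k / ((2 + \<beta>) * real t - 2)) + R \<beta> k 1"
proof -
  define A where "A = set_pmf (choices \<beta> t)"
  define c1 where "c1 = 1 + real k / ((2 + \<beta>) * real t - 2)"
  have fA: "finite A" using finite_set_choices[OF b] by (simp add: A_def)
  have AV: "a \<in> A \<Longrightarrow> length a = t - 1 \<and> valid a" for a using set_choices[OF b, of t] by (auto simp: A_def)
  have "EPhi \<beta> k (Suc t) = measure_pmf.expectation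
       (bind_pmf (choices \<beta> t) (\<lambda>xs. map_pmf (\<lambda>f. xs @ [f]) (fpmf \<beta> t))) (\<lambda>fs. Phi \<beta> k fs (Suc t))"
    using t1 by (simp add: EPhi_def)
  also have "\<dots> = (\<Sum>a\<in>A. pmf (choices \<beta> t) a *\<^sub>R measure_pmf.expectation
         (map_pmf (\<lambda>f. a @ [f]) (fpmf \<beta> t)) (\<lambda>fs. Phi \<beta> k fs (Suc t)))"
    apply (rule pmf_expectation_bind[OF fA])
    using finite_subset[OF set_fpmf[OF b t1] finite_Om] apply simp
    by (simp add: A_def)
  also have "\<dots> = (\<Sum>a\<in>A. pmf (choices \<beta> t) a * (Phi \<beta> k a t * c1 + R \<beta> k 1))"
    by (rule sum.cong[OF refl]) (use AV expect_step[OF b _ t1] in \<open>simp add: c1_def\<close>)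
  also have "\<dots> = c1 * (\<Sum>a\<in>A. Phi \<beta> k a t * pmf (choices \<beta> t) a) + R \<beta> k 1 * (\<Sum>a\<in>A. pmf (choices \<beta> t) a)"
    by (simp add: algebra_simps sum.distrib sum_distrib_left)
  also have "(\<Sum>a\<in>A. pmf (choices \<beta> t) a) = 1" by (rule sum_pmf_eq_1[OF fA]) (simp add: A_def)
  also have "(\<Sum>a\<in>A. Phi \<beta> k a t * pmf (choices \<beta> t) a) = EPhi \<beta> k t"
    unfolding EPhi_def by (rule integral_measure_pmf_real[OF fA, symmetric]) (simp add: A_def)
  finally show ?thesis by (simp add: c1_def mult.commute)
qed

lemma pow_Suc_ge: "(s::real) \<ge> 0 \<Longrightarrow> s ^ Suc q + real (Suc q) * s ^ q \<le> (s + 1) ^ Suc q"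
proof (induction q)
  case 0 thus ?case by simp
next
  case (Suc q)
  have "s ^ Suc (Suc q) + real (Suc (Suc q)) * s ^ Suc q
      \<le> (s + 1) * (s ^ Suc q + real (Suc q) * s ^ q)"
    using Suc.prems by (simp add: algebra_simps)
  also have "\<dots> \<le> (s + 1) * (s + 1) ^ Suc q"
    using Suc by (intro mult_left_mono) auto
  finally show ?case by simp
qed

lemma EPhi_bound:
  assumes b: "\<beta> > 0"
  and q: "real (Suc q') > real k / (2 + \<beta>)"
  and C0: "C \<ge> 0"
  and Cbase: "R \<beta> k 0 \<le> C * (\<beta> / (2 + \<beta>)) ^ Suc q'"
  and Cstep: "R \<beta> k 1 \<le> C * (real (Suc q') - real k / (2 + \<beta>)) * (\<beta> / (2 + \<beta>)) ^ q'"
  and t1: "t \<ge> 1"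
  shows "EPhi \<beta> k t \<le> C * (real t - 2 / (2 + \<beta>)) ^ Suc q'"
  using t1
proof (induction t rule: dec_induct)
  case base
  have "1 - 2 / (2 + \<beta>) = \<beta> / (2 + \<beta>)" using b by (simp add: field_simps)
  thus ?case using Cbase EPhi_1[of \<beta> k] by simp
next
  case (step t)
  define s where "s = real t - 2 / (2 + \<beta>)"
  define p where "p = real k / (2 + \<beta>)"
  have s1: "s \<ge> \<beta> / (2 + \<beta>)"
  proof -
    have "1 - 2 / (2 + \<beta>) = \<beta> / (2 + \<beta>)" using b by (simp add: field_simps)
    thus ?thesis using step.hyps by (simp add: s_def)
  qed
  have spos: "s > 0" using s1 b by (smt (verit) divide_pos_pos)
  have Seq: "(2 + \<beta>) * real t - 2 = (2 + \<beta>) * s" using b by (simp add: s_def field_simps)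
  have kS: "real k / ((2 + \<beta>) * real t - 2) = p / s" unfolding Seq p_def by simp
  have p0: "p \<ge> 0" using b by (simp add: p_def)
  have "EPhi \<beta> k (Suc t) = EPhi \<beta> k t * (1 + p / s) + R \<beta> k 1"
    using EPhi_step[OF b step.hyps(1)] kS by simp
  also have "\<dots> \<le> C * s ^ Suc q' * (1 + p / s) + R \<beta> k 1"
    using step.IH spos p0 by (intro add_right_mono mult_right_mono) (auto simp: s_def)
  also have "C * s ^ Suc q' * (1 + p / s) = C * s ^ Suc q' + C * p * s ^ q'"
    using spos by (simp add: field_simps)
  also have "R \<beta> k 1 \<le> C * (real (Suc q') - p) * s ^ q'"
  proof -
    have "(\<beta> / (2 + \<beta>)) ^ q' \<le> s ^ q'" using s1 b by (intro power_mono) auto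
    hence "C * (real (Suc q') - p) * (\<beta> / (2 + \<beta>)) ^ q' \<le> C * (real (Suc q') - p) * s ^ q'"
      using C0 q by (intro mult_left_mono mult_nonneg_nonneg) (auto simp: p_def)
    thus ?thesis using Cstep by (simp add: p_def)
  qed
  hence "C * s ^ Suc q' + C * p * s ^ q' + R \<beta> k 1 \<le> C * (s ^ Suc q' + real (Suc q') * s ^ q')"
    by (simp add: algebra_simps)
  also have "\<dots> \<le> C * (s + 1) ^ Suc q'"
    using pow_Suc_ge[of s q'] spos C0 by (intro mult_left_mono) auto
  also have "s + 1 = real (Suc t) - 2 / (2 + \<beta>)" by (simp add: s_def)
  finally show ?case by simp
qed



lemma card_fiber:
  assumes "finite I" "finite W"
  shows "card {i\<in>I. h i \<in> W} = (\<Sum>v\<in>W. card {i\<in>I. h i = v})"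
proof -
  have "{i\<in>I. h i \<in> W} = (\<Union>v\<in>W. {i\<in>I. h i = v})" by auto
  hence "card {i\<in>I. h i \<in> W} = card (\<Union>v\<in>W. {i\<in>I. h i = v})" by simp
  also have "\<dots> = (\<Sum>v\<in>W. card {i\<in>I. h i = v})"
    by (rule card_UN_disjoint) (use assms in auto)
  finally show ?thesis .
qed

lemma blk_bounds:
  assumes "m \<ge> 1" "blk m v = j"
  shows "j * m \<le> v + m - 1" "v + m - 1 < j * m + m"
proof -
  have e: "v + m - 1 = j * m + (v + m - 1) mod m" using assms div_mult_mod_eq[of "v + m - 1" m]
    by (simp add: blk_def)
  have "(v + m - 1) mod m < m" using assms by simp
  thus "j * m \<le> v + m - 1" "v + m - 1 < j * m + m" using e by linarith+
qed

lemma card_block: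
  assumes m: "m \<ge> 1" and j: "j \<ge> 1"
  shows "card {v\<in>{1..t}. blk m v = j} \<le> m"
proof -
  obtain j' where j': "j = Suc j'" using j by (cases j) auto
  have "{v\<in>{1..t}. blk m v = j} \<subseteq> {j' * m + 1 .. j * m}"
  proof
    fix v assume "v \<in> {v\<in>{1..t}. blk m v = j}"
    hence v: "v \<ge> 1" "blk m v = j" by auto
    from blk_bounds[OF m v(2)] v(1) m show "v \<in> {j' * m + 1 .. j * m}" by (simp add: j'; arith)
  qed
  hence "card {v\<in>{1..t}. blk m v = j} \<le> card {j' * m + 1 .. j * m}" by (intro card_mono) auto
  also have "\<dots> = m" by (simp add: j')
  finally show ?thesis .
qed

lemma maxdeg_bound:
  assumes b: "\<beta> > 0" and m: "m \<ge> 1" and t1: "t \<ge> 1" and len: "length fs = t - 1" and vf: "valid fs"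
  shows "real (maxdegH m fs t) ^ k \<le> real m ^ k * Phi \<beta> k fs t"
proof -
  define M where "M = Max (dG fs t ` {1..t})"
  have hr: "i \<in> {2..t} \<Longrightarrow> 1 \<le> head fs i \<and> head fs i < i" for i
    using valid_heads[OF vf, of i] len t1 by auto
  have dj: "degH m fs t j \<le> m * M" if j: "j \<ge> 1" for j
  proof -
    define W where "W = {v\<in>{1..t}. blk m v = j}"
    have "card {i\<in>{2..t}. blk m i = j} = card {i\<in>{2..t}. i \<in> W}"
      by (rule card_filter_cong) (auto simp: W_def)
    also have "\<dots> = (\<Sum>v\<in>W. card {i\<in>{2..t}. i = v})"
      by (rule card_fiber) (auto simp: W_def)
    finally have c1: "card {i\<in>{2..t}. blk m i = j} = (\<Sum>v\<in>W. card {i\<in>{2..t}. i = v})" .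
    have "card {i\<in>{2..t}. blk m (head fs i) = j} = card {i\<in>{2..t}. head fs i \<in> W}"
    proof (rule card_filter_cong)
    fix i assume "i \<in> {2..t}"
    hence "head fs i \<in> {1..t}" using hr[of i] by auto
    thus "(blk m (head fs i) = j) = (head fs i \<in> W)" by (auto simp: W_def)
  qed
    also have "\<dots> = (\<Sum>v\<in>W. card {i\<in>{2..t}. head fs i = v})"
      by (rule card_fiber) (auto simp: W_def)
    finally have c2: "card {i\<in>{2..t}. blk m (head fs i) = j} = (\<Sum>v\<in>W. card {i\<in>{2..t}. head fs i = v})" .
    have "degH m fs t j = (\<Sum>v\<in>W. dG fs t v)"
      unfolding degH_def dG_def c1 c2 sum.distrib ..
    also have "\<dots> \<le> (\<Sum>v\<in>W. M)"
      by (rule sum_mono) (auto simp: W_def M_def)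
    also have "\<dots> = card W * M" by simp
    also have "\<dots> \<le> m * M" using card_block[OF m j, of t] by (simp add: W_def)
    finally show ?thesis .
  qed
  have ne: "{1..blk m t} \<noteq> {}"
  proof -
    have "m \<le> t + m - 1" using t1 by simp
    hence "m div m \<le> (t + m - 1) div m" by (rule div_le_mono)
    thus ?thesis using m by (simp add: blk_def)
  qed
  have "maxdegH m fs t \<le> m * M"
    unfolding maxdegH_def using ne dj by (intro Max.boundedI) auto
  obtain v0 where v0: "v0 \<in> {1..t}" "M = dG fs t v0"
    using Max_in[of "dG fs t ` {1..t}"] t1 unfolding M_def by fastforce
  have "real (maxdegH m fs t) ^ k \<le> real (m * M) ^ k"
    using \<open>maxdegH m fs t \<le> m * M\<close> by (intro power_mono) (simp_all only: of_nat_le_iff of_nat_0_le_iff)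
  also have "\<dots> = real m ^ k * real M ^ k" by (simp add: power_mult_distrib)
  also have "real M ^ k \<le> R \<beta> k (dG fs t v0)" using R_ge_pow[OF b] v0 by simp
  also have "R \<beta> k (dG fs t v0) \<le> Phi \<beta> k fs t"
    unfolding Phi_def using v0(1) by (intro member_le_sum) (auto simp: R_nonneg[OF b])
  finally show ?thesis by (simp add: mult_left_mono)
qed

lemma marginal:
  assumes b: "\<beta> > 0" and t1: "t \<ge> 1" and tT: "t \<le> T"
  shows "map_pmf (take (t - 1)) (choices \<beta> T) = choices \<beta> t"
  using tT
proof (induction T rule: dec_induct)
  case base
  have "map_pmf (take (t - 1)) (choices \<beta> t) = map_pmf id (choices \<beta> t)"
    by (rule map_pmf_cong) (use set_choices[OF b, of t] in auto)
  thus ?case by simp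
next
  case (step T)
  have T0: "T \<noteq> 0" using step.hyps t1 by auto
  have "map_pmf (take (t - 1)) (choices \<beta> (Suc T)) =
      bind_pmf (choices \<beta> T) (\<lambda>xs. map_pmf (take (t - 1)) (map_pmf (\<lambda>f. xs @ [f]) (fpmf \<beta> T)))"
    using T0 by (simp add: map_bind_pmf)
  also have "\<dots> = bind_pmf (choices \<beta> T) (\<lambda>xs. return_pmf (take (t - 1) xs))"
  proof (rule bind_pmf_cong[OF refl])
    fix xs assume "xs \<in> set_pmf (choices \<beta> T)"
    hence "length xs = T - 1" using set_choices[OF b, of T] by auto
    hence "take (t - 1) (xs @ [f]) = take (t - 1) xs" for f using step.hyps by simp
    thus "map_pmf (take (t - 1)) (map_pmf (\<lambda>f. xs @ [f]) (fpmf \<beta> T)) = return_pmf (take (t - 1) xs)"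
      by (simp add: map_pmf_comp)
  qed
  also have "\<dots> = map_pmf (take (t - 1)) (choices \<beta> T)" by (simp add: map_pmf_def)
  finally show ?case using step.IH by simp
qed

lemma maxdegH_take: "t \<ge> 1 \<Longrightarrow> maxdegH m (take (t - 1) fs) t = maxdegH m fs t"
proof -
  assume t1: "t \<ge> 1"
  have "degH m (take (t - 1) fs) t j = degH m fs t j" for j
    unfolding degH_def by (intro arg_cong2[where f="(+)"] refl card_filter_cong) (use t1 head_take in auto)
  thus ?thesis unfolding maxdegH_def by simp
qed

lemma markov_deg:
  assumes b: "\<beta> > 0" and m: "m \<ge> 1" and t1: "t \<ge> 1" and tT: "t \<le> T" and lam: "c > 0"
  shows "measure_pmf.prob (choices \<beta> T) {fs. c \<le> real (maxdegH m fs t) ^ k}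
     \<le> real m ^ k * EPhi \<beta> k t / c"
proof -
  define A where "A = {fs. c \<le> real (maxdegH m fs t) ^ k}"
  have "{fs. c \<le> real (maxdegH m fs t) ^ k} = take (t - 1) -` A"
    unfolding A_def using maxdegH_take[OF t1] by auto
  hence "measure_pmf.prob (choices \<beta> T) {fs. c \<le> real (maxdegH m fs t) ^ k}
      = measure_pmf.prob (map_pmf (take (t - 1)) (choices \<beta> T)) A" by simp
  also have "\<dots> = measure_pmf.prob (choices \<beta> t) A" using marginal[OF b t1 tT] by simp
  also have "\<dots> = measure_pmf.prob (choices \<beta> t) (A \<inter> set_pmf (choices \<beta> t))"
    by (simp add: measure_Int_set_pmf)
  also have "\<dots> \<le> measure_pmf.prob (choices \<beta> t) {fs \<in> space (measure_pmf (choices \<beta> t)). c \<le> real m ^ k * Phi \<beta> k fs t}"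
  proof (rule measure_pmf.finite_measure_mono)
    show "A \<inter> set_pmf (choices \<beta> t) \<subseteq> {fs \<in> space (measure_pmf (choices \<beta> t)). c \<le> real m ^ k * Phi \<beta> k fs t}"
    proof
      fix fs assume "fs \<in> A \<inter> set_pmf (choices \<beta> t)"
      hence "c \<le> real (maxdegH m fs t) ^ k" "length fs = t - 1" "valid fs"
        using set_choices[OF b, of t] by (auto simp: A_def)
      thus "fs \<in> {fs \<in> space (measure_pmf (choices \<beta> t)). c \<le> real m ^ k * Phi \<beta> k fs t}"
        using maxdeg_bound[OF b m t1, of fs k] by simp
    qed
  qed simp
  also have "\<dots> \<le> measure_pmf.expectation (choices \<beta> t) (\<lambda>fs. real m ^ k * Phi \<beta> k fs t) / c"
  proof (rule integral_Markov_inequality_measure)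
    show "integrable (measure_pmf (choices \<beta> t)) (\<lambda>fs. real m ^ k * Phi \<beta> k fs t)"
      by (rule integrable_measure_pmf_finite[OF finite_set_choices[OF b]])
    show "AE x in measure_pmf (choices \<beta> t). 0 \<le> real m ^ k * Phi \<beta> k x t"
      by (rule AE_I2) (auto simp: Phi_def R_nonneg[OF b] intro!: sum_nonneg mult_nonneg_nonneg)
  qed (use lam in auto)
  also have "measure_pmf.expectation (choices \<beta> t) (\<lambda>fs. real m ^ k * Phi \<beta> k fs t) = real m ^ k * EPhi \<beta> k t"
    by (simp add: EPhi_def)
  finally show ?thesis .
qed



lemma powr_step:
  fixes a :: real
  assumes a: "0 < a" "a < 1" and i: "i \<ge> 1"
  shows "a * real i powr (a - 1) \<le> real i powr a - real (i - 1) powr a"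
proof (cases "i = 1")
  case True thus ?thesis using a by simp
next
  case False
  hence i2: "i \<ge> 2" using i by simp
  have "\<exists>z. real (i - 1) < z \<and> z < real i \<and>
      real i powr a - real (i - 1) powr a = (real i - real (i - 1)) * (a * z powr (a - 1))"
  proof (rule MVT2)
    show "real (i - 1) < real i" using i by simp
    fix x assume "real (i - 1) \<le> x" "x \<le> real i"
    hence "x > 0" using i2 by simp
    thus "((\<lambda>z. z powr a) has_real_derivative a * x powr (a - 1)) (at x)"
      by (rule has_real_derivative_powr)
  qed
  then obtain z where z: "real (i - 1) < z" "z < real i"
    "real i powr a - real (i - 1) powr a = (real i - real (i - 1)) * (a * z powr (a - 1))" by blast
  have zpos: "z > 0" using z(1) i2 by simp
  have "real i powr (a - 1) \<le> z powr (a - 1)"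
    by (rule powr_mono2') (use a zpos z in auto)
  hence "a * real i powr (a - 1) \<le> a * z powr (a - 1)" using a by simp
  also have "\<dots> = real i powr a - real (i - 1) powr a" using z(3) i by (simp add: of_nat_diff)
  finally show ?thesis .
qed

lemma powr_sum_bound:
  fixes a :: real
  assumes a: "0 < a" "a < 1"
  shows "a * (\<Sum>i=1..n. real i powr (a - 1)) \<le> real n powr a"
proof (induction n)
  case 0 thus ?case by simp
next
  case (Suc n)
  have "a * (\<Sum>i=1..Suc n. real i powr (a - 1)) = a * (\<Sum>i=1..n. real i powr (a - 1)) + a * real (Suc n) powr (a - 1)"
    by (simp add: distrib_left)
  also have "\<dots> \<le> real n powr a + (real (Suc n) powr a - real (Suc n - 1) powr a)"
    using Suc powr_step[OF a, of "Suc n"] by (intro add_mono) auto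
  finally show ?case by simp
qed



theorem lemma8:
  fixes \<beta> \<delta> \<gamma> :: real and m :: nat
  assumes "\<beta> > 0" and "m \<ge> 1" and "\<delta> > 0" and "\<gamma> > 0"
  shows "\<exists>L. \<forall>n::nat. n \<ge> 1 \<longrightarrow>
           measure_pmf.prob (choices \<beta> (m * n)) (eventB \<beta> m \<delta> n) \<le> L * real n powr (- \<gamma>)"
proof -
  have b: "\<beta> > 0" and m1: "m \<ge> 1" and d0: "\<delta> > 0" and g0: "\<gamma> > 0" using assms by auto
  define e where "e = 2 / (2 + \<beta>)"
  define a where "a = \<beta> / (2 + \<beta>)"
  have a0: "a > 0" and a1: "a < 1" using b by (auto simp: a_def field_simps)
  have e0: "e > 0" using b by (simp add: e_def)
  have ae: "a - 1 = - e" using b by (simp add: a_def e_def field_simps)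
  define k' where "k' = nat \<lceil>(\<gamma> + 2) / \<delta>\<rceil>"
  have "(\<gamma> + 2) / \<delta> \<le> real k'" unfolding k'_def by (rule real_nat_ceiling_ge)
  hence dk: "\<delta> * real k' \<ge> \<gamma> + 2" using d0 by (simp add: field_simps)
  define k where "k = 2 * k'"
  define p where "p = real k / (2 + \<beta>)"
  have p0: "p \<ge> 0" using b by (simp add: p_def)
  have ek: "e * real k' = p" by (simp add: e_def p_def k_def)
  define q' where "q' = nat \<lfloor>p\<rfloor>"
  have q'eq: "real q' = of_int \<lfloor>p\<rfloor>" using p0 by (simp add: q'_def)
  have qp1: "real (Suc q') > p" using q'eq by linarith
  have qp2: "real (Suc q') \<le> p + 1" using q'eq by linarith
  define C where "C = max (R \<beta> k 0 / a ^ Suc q') (R \<beta> k 1 / ((real (Suc q') - p) * a ^ q'))"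
  have C0: "C \<ge> 0" unfolding C_def using R_nonneg[OF b] a0 by (auto intro!: max.coboundedI1 divide_nonneg_pos)
  have Cbase: "R \<beta> k 0 \<le> C * a ^ Suc q'"
  proof -
    have "R \<beta> k 0 / a ^ Suc q' \<le> C" unfolding C_def by simp
    thus ?thesis using a0 by (simp add: divide_le_eq)
  qed
  have Cstep: "R \<beta> k 1 \<le> C * (real (Suc q') - p) * a ^ q'"
  proof -
    have pos: "(real (Suc q') - p) * a ^ q' > 0" using qp1 a0 by simp
    have "R \<beta> k 1 / ((real (Suc q') - p) * a ^ q') \<le> C" unfolding C_def by simp
    thus ?thesis using pos by (simp add: divide_le_eq mult.assoc)
  qed
  have EB: "EPhi \<beta> k t \<le> C * real t ^ Suc q'" if t1: "t \<ge> 1" for t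
  proof -
    have "EPhi \<beta> k t \<le> C * (real t - 2 / (2 + \<beta>)) ^ Suc q'"
      by (rule EPhi_bound[OF b _ C0 _ _ t1]) (use qp1 Cbase Cstep in \<open>simp_all add: p_def a_def\<close>)
    also have "\<dots> \<le> C * real t ^ Suc q'"
    proof -
      have "1 - 2 / (2 + \<beta>) > 0" using a0 b by (simp add: a_def field_simps)
      hence "0 \<le> real t - 2 / (2 + \<beta>)" using t1 by linarith
      moreover have "real t - 2 / (2 + \<beta>) \<le> real t" using b by simp
      ultimately show ?thesis using C0 by (intro mult_left_mono power_mono) auto
    qed
    finally show ?thesis .
  qed
  define A0 where "A0 = (a * real m powr (2 * e)) ^ k'"
  have A0pos: "A0 > 0" using a0 m1 by (simp add: A0_def)
  define K where "K = real m ^ k * C * real m ^ Suc q' / A0"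
  have K0: "K \<ge> 0" using C0 A0pos by (simp add: K_def)
  show ?thesis
  proof (intro exI[of _ K] allI impI)
    fix n :: nat assume n1: "n \<ge> 1"
    have npos: "real n > 0" using n1 by simp
    define W where "W i = a * real n powr \<delta> * real i powr (a - 1) * (real (m * i) powr e) ^ 2" for i :: nat
    define Bi where "Bi i = {fs. W i ^ k' \<le> real (maxdegH m fs (m * i)) ^ k}" for i :: nat
    have Wpos: "W i > 0" if "i \<ge> 1" for i using that a0 npos m1 by (simp add: W_def)
    have sub: "eventB \<beta> m \<delta> n \<subseteq> (\<Union>i\<in>{1..n}. Bi i)"
    proof
      fix fs assume fsB: "fs \<in> eventB \<beta> m \<delta> n"
      show "fs \<in> (\<Union>i\<in>{1..n}. Bi i)"
      proof (rule ccontr)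
        assume "fs \<notin> (\<Union>i\<in>{1..n}. Bi i)"
        hence lt: "real (maxdegH m fs (m * i)) ^ k < W i ^ k'" if "i \<in> {1..n}" for i
          using that by (auto simp: Bi_def not_le)
        have each: "(real (maxdegH m fs (m * i)) / real (m * i) powr (2 / (2 + \<beta>)))\<^sup>2
                   < a * real n powr \<delta> * real i powr (a - 1)" if i: "i \<in> {1..n}" for i
        proof -
          define D where "D = real (maxdegH m fs (m * i))"
          define P where "P = real (m * i) powr e"
          have Ppos: "P > 0" using i m1 by (simp add: P_def)
          have "(D ^ 2) ^ k' < W i ^ k'" using lt[OF i] by (simp add: D_def k_def power_mult)
          have W0: "0 \<le> W i" using Wpos[of i] i by auto
          from \<open>(D ^ 2) ^ k' < W i ^ k'\<close> W0 have "D ^ 2 < W i" by (rule power_less_imp_less_base)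
          hence "D ^ 2 / P ^ 2 < W i / P ^ 2" using Ppos by (simp add: divide_strict_right_mono)
          also have "W i / P ^ 2 = a * real n powr \<delta> * real i powr (a - 1)"
            using Ppos by (simp add: W_def P_def)
          finally show ?thesis by (simp add: D_def P_def e_def power_divide)
        qed
        have "(\<Sum>i=1..n. (real (maxdegH m fs (m * i)) / real (m * i) powr (2 / (2 + \<beta>)))\<^sup>2)
             < (\<Sum>i=1..n. a * real n powr \<delta> * real i powr (a - 1))"
          by (rule sum_strict_mono) (use each n1 in auto)
        also have "\<dots> = real n powr \<delta> * (a * (\<Sum>i=1..n. real i powr (a - 1)))"
          by (simp add: sum_distrib_left algebra_simps)
        also have "\<dots> \<le> real n powr \<delta> * real n powr a"
          by (rule mult_left_mono[OF powr_sum_bound[OF a0 a1]]) simp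
        also have "\<dots> = real n powr (\<beta> / (2 + \<beta>) + \<delta>)"
          by (simp add: a_def powr_add)
        finally show False using fsB by (simp add: eventB_def)
      qed
    qed
    have probi: "measure_pmf.prob (choices \<beta> (m * n)) (Bi i) \<le> K * real n / real n powr (\<delta> * real k')"
      if i: "i \<in> {1..n}" for i
    proof -
      have i1: "i \<ge> 1" "i \<le> n" using i by auto
      have t1: "m * i \<ge> 1" using m1 i1 by simp
      have tT: "m * i \<le> m * n" using i1 by simp
      have ipos: "real i > 0" using i1 by simp
      have Wid: "W i = a * real m powr (2 * e) * real n powr \<delta> * real i powr e"
      proof -
        have tw: "(x powr e) ^ 2 = x powr (2 * e)" for x :: real
          by (simp only: power2_eq_square powr_add[symmetric] mult_2)
        have "(real (m * i) powr e) ^ 2 = (real m powr e * real i powr e) ^ 2"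
          by (simp only: of_nat_mult powr_mult)
        also have "\<dots> = (real m powr e) ^ 2 * (real i powr e) ^ 2" by (rule power_mult_distrib)
        also have "\<dots> = real m powr (2 * e) * real i powr (2 * e)" by (simp only: tw)
        finally have h1: "(real (m * i) powr e) ^ 2 = real m powr (2 * e) * real i powr (2 * e)" .
        have "real i powr (a - 1) * real i powr (2 * e) = real i powr (a - 1 + 2 * e)"
          by (simp only: powr_add)
        also have "a - 1 + 2 * e = e" using ae by linarith
        finally have h2: "real i powr (a - 1) * real i powr (2 * e) = real i powr e" .
        have "W i = a * real n powr \<delta> * (real i powr (a - 1) * real i powr (2 * e)) * real m powr (2 * e)"
          unfolding W_def h1 by (simp only: mult_ac)
        thus ?thesis unfolding h2 by (simp only: mult_ac)
      qed
      have Wk: "W i ^ k' = A0 * real n powr (\<delta> * real k') * real i powr p"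
      proof -
        have "W i ^ k' = (a * real m powr (2 * e)) ^ k' * (real n powr \<delta>) ^ k' * (real i powr e) ^ k'"
          unfolding Wid by (simp add: power_mult_distrib)
        also have "(real n powr \<delta>) ^ k' = real n powr (\<delta> * real k')"
          using npos by (simp add: powr_realpow[symmetric] powr_powr)
        also have "(real i powr e) ^ k' = real i powr p"
          using ipos by (simp add: powr_realpow[symmetric] powr_powr ek)
        finally show ?thesis by (simp add: A0_def)
      qed
      have "measure_pmf.prob (choices \<beta> (m * n)) (Bi i) \<le> real m ^ k * EPhi \<beta> k (m * i) / W i ^ k'"
        unfolding Bi_def by (rule markov_deg[OF b m1 t1 tT]) (use Wpos i1 in simp)
      also have "\<dots> \<le> real m ^ k * (C * real (m * i) ^ Suc q') / W i ^ k'"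
        using EB[OF t1] Wpos[OF i1(1)] by (intro divide_right_mono mult_left_mono) auto
      also have "real (m * i) ^ Suc q' = real m ^ Suc q' * real i powr real (Suc q')"
        using powr_realpow[OF ipos, of "Suc q'"] by (simp only: of_nat_mult power_mult_distrib)
      also have "real i powr real (Suc q') \<le> real i powr p * real n"
      proof -
        have "real i powr real (Suc q') \<le> real i powr (p + 1)"
          using qp2 i1 by (intro powr_mono) auto
        also have "\<dots> = real i powr p * real i" using ipos by (simp add: powr_add)
        also have "\<dots> \<le> real i powr p * real n" using i1 by (intro mult_left_mono) auto
        finally show ?thesis .
      qed
      hence "real m ^ k * (C * (real m ^ Suc q' * real i powr real (Suc q'))) / W i ^ k'
          \<le> real m ^ k * (C * (real m ^ Suc q' * (real i powr p * real n))) / W i ^ k'"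
        using C0 Wpos[OF i1(1)] by (intro divide_right_mono mult_left_mono) auto
      also have "\<dots> = K * real n / real n powr (\<delta> * real k')"
        unfolding Wk K_def using A0pos ipos npos by (simp add: field_simps)
      finally show ?thesis .
    qed
    have "measure_pmf.prob (choices \<beta> (m * n)) (eventB \<beta> m \<delta> n)
        \<le> measure_pmf.prob (choices \<beta> (m * n)) (\<Union>i\<in>{1..n}. Bi i)"
      by (rule measure_pmf.finite_measure_mono[OF sub]) simp
    also have "\<dots> \<le> (\<Sum>i\<in>{1..n}. measure_pmf.prob (choices \<beta> (m * n)) (Bi i))"
      by (rule measure_pmf.finite_measure_subadditive_finite) auto
    also have "\<dots> \<le> (\<Sum>i\<in>{1..n}. K * real n / real n powr (\<delta> * real k'))"
      by (rule sum_mono) (rule probi)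
    also have "\<dots> = K * (real n ^ 2 / real n powr (\<delta> * real k'))"
      by (simp add: power2_eq_square)
    also have "real n ^ 2 / real n powr (\<delta> * real k') \<le> real n powr (- \<gamma>)"
    proof -
      have "real n powr (\<gamma> + 2) \<le> real n powr (\<delta> * real k')"
        using dk n1 by (intro powr_mono) auto
      moreover have "real n powr (\<gamma> + 2) = real n powr \<gamma> * real n ^ 2"
      proof -
        have "real n powr (2::real) = real n ^ 2" using powr_realpow[OF npos, of 2] by simp
        thus ?thesis by (simp only: powr_add)
      qed
      ultimately have "real n ^ 2 / real n powr (\<delta> * real k') \<le> real n ^ 2 / (real n powr \<gamma> * real n ^ 2)"
        using npos by (intro divide_left_mono) auto
      also have "\<dots> = real n powr (- \<gamma>)" using npos by (simp add: powr_minus divide_simps)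
      finally show ?thesis .
    qed
    hence "K * (real n ^ 2 / real n powr (\<delta> * real k')) \<le> K * real n powr (- \<gamma>)"
      using K0 by (rule mult_left_mono)
    finally show "measure_pmf.prob (choices \<beta> (m * n)) (eventB \<beta> m \<delta> n) \<le> K * real n powr (- \<gamma>)" .
  qed
qed


end
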